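(* Let $G=(V,E)$ be a finite graph with at least one vertex and $k>0$ an integer. Then $G$ has a bramble of order at least $k$ if and only if $G$ has an $\mathcal F_k$-tangle of $S_k$, where $\mathcal F_k$ is the set of all stars $\sigma=\{(A_i,B_i):i=0,\dots,n\}\subseteq\vec S_k$ with $\bigl|\bigcap_{i=0}^nB_i\bigr|<k$.
   Context: An oriented vertex separation of $G$ is an ordered pair $(A,B)$ with $A\cup B=V$ and no edge between $A\setminus B$ and $B\setminus A$; $(A,B)\le(C,D)$ iff $A\subseteq C$ and $B\supseteq D$; $(A,B)^*=(B,A)$. $\vec S_k$ is the set of those with $|A\cap B|<k$, and $S_k$ the set of pairs $\{(A,B),(B,A)\}$ with $(A,B)\in\vec S_k$. A star is a nonempty set $\sigma$ with $\vec r\le\vec s^{\,*}$ for all distinct $\vec r,\vec s\in\sigma$. An orientation of $S_k$ contains exactly one of $(A,B),(B,A)$ for each such pair; it is consistent if there are no distinct $r,s\in S_k$ with orientations $\vec r<\vec s$ such that $\vec r^{\,*},\vec s\in O$; an $\mathcal F_k$-tangle is a consistent orientation of $S_k$ no subset of which lies in $\mathcal F_k$. Two vertex sets touch if they share a vertex or $G$ has an edge between them. A bramble is a set of vertex sets each inducing a connected subgraph, any two of which touch; its order is the minimum size of a vertex set meeting every element of the bramble. *)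

theory Defs
  imports Main
begin

definition is_graph :: "'a set \<Rightarrow> ('a \<Rightarrow> 'a \<Rightarrow> bool) \<Rightarrow> bool" where
  "is_graph V E \<longleftrightarrow> (\<forall>x y. E x y \<longrightarrow> x \<in> V \<and> y \<in> V \<and> E y x)"

definition oriented_sep :: "'a set \<Rightarrow> ('a \<Rightarrow> 'a \<Rightarrow> bool) \<Rightarrow> 'a set \<times> 'a set \<Rightarrow> bool" where
  "oriented_sep V E s \<longleftrightarrow> fst s \<union> snd s = V \<and>
     \<not> (\<exists>a \<in> fst s - snd s. \<exists>b \<in> snd s - fst s. E a b)"

definition sep_le :: "'a set \<times> 'a set \<Rightarrow> 'a set \<times> 'a set \<Rightarrow> bool" where
  "sep_le s t \<longleftrightarrow> fst s \<subseteq> fst t \<and> snd t \<subseteq> snd s"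

definition sep_inv :: "'a set \<times> 'a set \<Rightarrow> 'a set \<times> 'a set" where
  "sep_inv s = (snd s, fst s)"

definition vSk :: "'a set \<Rightarrow> ('a \<Rightarrow> 'a \<Rightarrow> bool) \<Rightarrow> nat \<Rightarrow> ('a set \<times> 'a set) set" where
  "vSk V E k = {s. oriented_sep V E s \<and> card (fst s \<inter> snd s) < k}"

definition is_star :: "('a set \<times> 'a set) set \<Rightarrow> bool" where
  "is_star \<sigma> \<longleftrightarrow> \<sigma> \<noteq> {} \<and> (\<forall>r \<in> \<sigma>. \<forall>s \<in> \<sigma>. r \<noteq> s \<longrightarrow> sep_le r (sep_inv s))"

definition Fk :: "'a set \<Rightarrow> ('a \<Rightarrow> 'a \<Rightarrow> bool) \<Rightarrow> nat \<Rightarrow> ('a set \<times> 'a set) set set" where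
  "Fk V E k = {\<sigma>. \<sigma> \<subseteq> vSk V E k \<and> finite \<sigma> \<and> is_star \<sigma> \<and> card (\<Inter> (snd ` \<sigma>)) < k}"

definition is_orientation :: "'a set \<Rightarrow> ('a \<Rightarrow> 'a \<Rightarrow> bool) \<Rightarrow> nat \<Rightarrow> ('a set \<times> 'a set) set \<Rightarrow> bool" where
  "is_orientation V E k Or \<longleftrightarrow> Or \<subseteq> vSk V E k \<and>
     (\<forall>s \<in> vSk V E k. (s \<in> Or \<or> sep_inv s \<in> Or) \<and>
        (s \<noteq> sep_inv s \<longrightarrow> \<not> (s \<in> Or \<and> sep_inv s \<in> Or)))"

definition is_consistent :: "'a set \<Rightarrow> ('a \<Rightarrow> 'a \<Rightarrow> bool) \<Rightarrow> nat \<Rightarrow> ('a set \<times> 'a set) set \<Rightarrow> bool" where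
  "is_consistent V E k Or \<longleftrightarrow>
     \<not> (\<exists>r \<in> vSk V E k. \<exists>s \<in> vSk V E k.
          {r, sep_inv r} \<noteq> {s, sep_inv s} \<and> sep_le r s \<and> r \<noteq> s \<and>
          sep_inv r \<in> Or \<and> s \<in> Or)"

definition is_Fk_tangle :: "'a set \<Rightarrow> ('a \<Rightarrow> 'a \<Rightarrow> bool) \<Rightarrow> nat \<Rightarrow> ('a set \<times> 'a set) set \<Rightarrow> bool" where
  "is_Fk_tangle V E k Or \<longleftrightarrow> is_orientation V E k Or \<and> is_consistent V E k Or \<and>
     (\<forall>\<sigma>. \<sigma> \<subseteq> Or \<longrightarrow> \<sigma> \<notin> Fk V E k)"

definition connected_in :: "('a \<Rightarrow> 'a \<Rightarrow> bool) \<Rightarrow> 'a set \<Rightarrow> bool" where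
  "connected_in E X \<longleftrightarrow> X \<noteq> {} \<and>
     (\<forall>x \<in> X. \<forall>y \<in> X. (\<lambda>a b. a \<in> X \<and> b \<in> X \<and> E a b)\<^sup>*\<^sup>* x y)"

definition touch :: "('a \<Rightarrow> 'a \<Rightarrow> bool) \<Rightarrow> 'a set \<Rightarrow> 'a set \<Rightarrow> bool" where
  "touch E X Y \<longleftrightarrow> X \<inter> Y \<noteq> {} \<or> (\<exists>x \<in> X. \<exists>y \<in> Y. E x y)"

definition is_bramble :: "'a set \<Rightarrow> ('a \<Rightarrow> 'a \<Rightarrow> bool) \<Rightarrow> 'a set set \<Rightarrow> bool" where
  "is_bramble V E \<B> \<longleftrightarrow> (\<forall>X \<in> \<B>. X \<subseteq> V \<and> connected_in E X) \<and>
     (\<forall>X \<in> \<B>. \<forall>Y \<in> \<B>. touch E X Y)"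

definition bramble_order :: "'a set \<Rightarrow> 'a set set \<Rightarrow> nat" where
  "bramble_order V \<B> = Min {card C | C. C \<subseteq> V \<and> (\<forall>X \<in> \<B>. C \<inter> X \<noteq> {})}"

end

theory Submission
  imports Defs
begin

definition nbr :: "'a set \<Rightarrow> ('a \<Rightarrow> 'a \<Rightarrow> bool) \<Rightarrow> 'a set \<Rightarrow> 'a set" where
  "nbr V E C = {v \<in> V - C. \<exists>c\<in>C. E c v}"

lemma sym_rtranclp:
  assumes "\<And>a b. r a b \<Longrightarrow> r b a" and "r\<^sup>*\<^sup>* x y"
  shows "r\<^sup>*\<^sup>* y x"
  using assms(2)
proof (induction rule: rtranclp_induct)
  case base thus ?case by simp
next
  case (step y z)
  thus ?case using assms(1) by (meson converse_rtranclp_into_rtranclp)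
qed

lemma sep_inv_inv[simp]: "sep_inv (sep_inv s) = s"
  by (simp add: sep_inv_def)

lemma sep_inv_vSk:
  assumes "is_graph V E" "s \<in> vSk V E k" shows "sep_inv s \<in> vSk V E k"
  using assms unfolding vSk_def oriented_sep_def sep_inv_def is_graph_def
  by (auto simp: Int_commute Un_commute)

lemma conn_stay:
  assumes "connected_in E X" "x0 \<in> X" "x0 \<in> P" "X \<subseteq> P \<union> Q"
    "\<And>a b. a \<in> P \<Longrightarrow> b \<in> Q \<Longrightarrow> \<not> E a b"
  shows "X \<subseteq> P"
proof
  fix y assume y: "y \<in> X"
  have "(\<lambda>a b. a \<in> X \<and> b \<in> X \<and> E a b)\<^sup>*\<^sup>* x0 y"
    using assms(1,2) y unfolding connected_in_def by blast
  then show "y \<in> P"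
  proof (induction rule: rtranclp_induct)
    case base thus ?case using assms(3) by simp
  next
    case (step b c)
    thus ?case using assms(4,5) by blast
  qed
qed

lemma conn_side:
  assumes g: "is_graph V E" and s: "oriented_sep V E (A,B)"
    and X: "connected_in E X" "X \<subseteq> V" "X \<inter> A \<inter> B = {}"
  shows "X \<subseteq> A - B \<or> X \<subseteq> B - A"
proof -
  obtain x0 where x0: "x0 \<in> X" using X(1) unfolding connected_in_def by blast
  have XU: "X \<subseteq> (A - B) \<union> (B - A)" using X(2,3) s unfolding oriented_sep_def by auto
  show ?thesis
  proof (cases "x0 \<in> A - B")
    case True
    have "X \<subseteq> A - B"
      by (rule conn_stay[OF X(1) x0 True XU]) (use s in \<open>auto simp: oriented_sep_def\<close>)
    thus ?thesis by blast
  next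
    case False
    hence x0B: "x0 \<in> B - A" using XU x0 by blast
    have XU': "X \<subseteq> (B - A) \<union> (A - B)" using XU by blast
    have "X \<subseteq> B - A"
      by (rule conn_stay[OF X(1) x0 x0B XU']) (use s g in \<open>auto simp: oriented_sep_def is_graph_def\<close>)
    thus ?thesis by blast
  qed
qed

lemma no_touch:
  assumes g: "is_graph V E" and s: "oriented_sep V E (A,B)" and "X \<subseteq> B - A" "Y \<subseteq> A - B"
  shows "\<not> touch E X Y"
  using assms unfolding touch_def oriented_sep_def is_graph_def by fastforce

lemma dir1:
  assumes fin: "finite V" and g: "is_graph V E" and k: "k > 0"
    and br: "is_bramble V E \<B>" and ord: "bramble_order V \<B> \<ge> k"
  shows "\<exists>Or. is_Fk_tangle V E k Or"
proof -
  have K: "\<exists>X\<in>\<B>. C \<inter> X = {}" if "C \<subseteq> V" "card C < k" for C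
  proof (rule ccontr)
    assume "\<not> ?thesis"
    hence "card C \<in> {card C | C. C \<subseteq> V \<and> (\<forall>X \<in> \<B>. C \<inter> X \<noteq> {})}" using that by blast
    moreover have "finite {card C | C. C \<subseteq> V \<and> (\<forall>X \<in> \<B>. C \<inter> X \<noteq> {})}"
    proof -
      have "{card C | C. C \<subseteq> V \<and> (\<forall>X \<in> \<B>. C \<inter> X \<noteq> {})} \<subseteq> card ` Pow V" by blast
      thus ?thesis using fin by (meson finite_Pow_iff finite_imageI finite_subset)
    qed
    ultimately have "bramble_order V \<B> \<le> card C" unfolding bramble_order_def
      by (simp add: Min_le)
    thus False using ord that(2) by linarith
  qed
  define Or where "Or = {s \<in> vSk V E k. \<exists>X\<in>\<B>. X \<subseteq> snd s - fst s}"
  have bX: "X \<subseteq> V" "connected_in E X" if "X \<in> \<B>" for X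
    using br that unfolding is_bramble_def by auto
  have bT: "touch E X Y" if "X \<in> \<B>" "Y \<in> \<B>" for X Y
    using br that unfolding is_bramble_def by auto
  have side: "\<exists>X\<in>\<B>. X \<subseteq> A - B \<or> X \<subseteq> B - A" if "(A,B) \<in> vSk V E k" for A B
  proof -
    have sep: "oriented_sep V E (A,B)" "card (A \<inter> B) < k" using that unfolding vSk_def by auto
    have "A \<inter> B \<subseteq> V" using sep(1) unfolding oriented_sep_def by auto
    then obtain X where X: "X \<in> \<B>" "A \<inter> B \<inter> X = {}" using K sep(2) by blast
    have "X \<subseteq> A - B \<or> X \<subseteq> B - A"
      by (rule conn_side[OF g sep(1) bX(2)[OF X(1)] bX(1)[OF X(1)]]) (use X(2) in blast)
    thus ?thesis using X(1) by blast
  qed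
  have nb: False if "oriented_sep V E (A,B)" "X \<in> \<B>" "Y \<in> \<B>" "X \<subseteq> B - A" "Y \<subseteq> A - B"
    for A B X Y
    using no_touch[OF g that(1) that(4,5)] bT[OF that(2,3)] by blast
  have o1: "s \<in> Or \<or> sep_inv s \<in> Or" if s: "s \<in> vSk V E k" for s
  proof -
    obtain A B where sAB: "s = (A,B)" by (cases s)
    have sv: "sep_inv s \<in> vSk V E k" using sep_inv_vSk[OF g s] .
    from side[of A B] s sAB obtain X where "X\<in>\<B>" "X \<subseteq> A - B \<or> X \<subseteq> B - A" by blast
    then show ?thesis unfolding Or_def using s sv sAB by (auto simp: sep_inv_def)
  qed
  have o2: "\<not> (s \<in> Or \<and> sep_inv s \<in> Or)" if s: "s \<in> vSk V E k" for s
  proof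
    assume a: "s \<in> Or \<and> sep_inv s \<in> Or"
    obtain A B where sAB: "s = (A,B)" by (cases s)
    from a obtain X Y where "X \<in> \<B>" "X \<subseteq> B - A" "Y \<in> \<B>" "Y \<subseteq> A - B"
      unfolding Or_def sAB sep_inv_def by auto
    moreover have "oriented_sep V E (A,B)" using s sAB unfolding vSk_def by auto
    ultimately show False using nb by blast
  qed
  have orient: "is_orientation V E k Or"
    unfolding is_orientation_def using o1 o2 by (auto simp: Or_def)
  have cons: "is_consistent V E k Or"
    unfolding is_consistent_def
  proof
    assume "\<exists>r\<in>vSk V E k. \<exists>s\<in>vSk V E k. {r, sep_inv r} \<noteq> {s, sep_inv s} \<and> sep_le r s \<and> r \<noteq> s \<and> sep_inv r \<in> Or \<and> s \<in> Or"
    then obtain r s where r: "r \<in> vSk V E k" and le: "sep_le r s" and i: "sep_inv r \<in> Or"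
      and s: "s \<in> Or" by blast
    obtain A B where rAB: "r = (A,B)" by (cases r)
    obtain C D where sCD: "s = (C,D)" by (cases s)
    obtain X where X: "X \<in> \<B>" "X \<subseteq> A - B" using i unfolding Or_def rAB sep_inv_def by auto
    obtain Y where Y: "Y \<in> \<B>" "Y \<subseteq> D - C" using s unfolding Or_def sCD by auto
    have "Y \<subseteq> B - A" using Y(2) le unfolding rAB sCD sep_le_def by auto
    moreover have "oriented_sep V E (A,B)" using r rAB unfolding vSk_def by auto
    ultimately show False using nb X Y(1) by blast
  qed
  have nF: "\<sigma> \<notin> Fk V E k" if sO: "\<sigma> \<subseteq> Or" for \<sigma>
  proof
    assume F: "\<sigma> \<in> Fk V E k"
    hence sv: "\<sigma> \<subseteq> vSk V E k" and st: "is_star \<sigma>" and cZ: "card (\<Inter> (snd ` \<sigma>)) < k"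
      unfolding Fk_def by auto
    have ne: "\<sigma> \<noteq> {}" using st unfolding is_star_def by auto
    have ZV: "\<Inter> (snd ` \<sigma>) \<subseteq> V" using ne sv unfolding vSk_def oriented_sep_def by blast
    obtain X where X: "X \<in> \<B>" "\<Inter> (snd ` \<sigma>) \<inter> X = {}" using K[OF ZV cZ] by blast
    obtain x where x: "x \<in> X" using bX(2)[OF X(1)] unfolding connected_in_def by blast
    then obtain s0 where s0: "s0 \<in> \<sigma>" "x \<notin> snd s0" using X(2) by blast
    obtain A B where AB0: "s0 = (A,B)" by (cases s0)
    have AB: "(A,B) \<in> \<sigma>" "x \<notin> B" using s0 AB0 by auto
    have sAB: "oriented_sep V E (A,B)" using AB(1) sv unfolding vSk_def by auto
    have xA: "x \<in> A - B" using x AB(2) sAB bX(1)[OF X(1)] unfolding oriented_sep_def by auto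
    have dis: "X \<inter> A \<inter> B = {}"
    proof (rule ccontr)
      assume "X \<inter> A \<inter> B \<noteq> {}"
      then obtain y where y: "y \<in> X" "y \<in> A" "y \<in> B" by blast
      have "\<forall>s\<in>\<sigma>. y \<in> snd s"
      proof
        fix s assume s: "s \<in> \<sigma>"
        show "y \<in> snd s"
        proof (cases "s = (A,B)")
          case True thus ?thesis using s y by simp
        next
          case False
          hence "sep_le (A,B) (sep_inv s)" using st s(1) AB(1) unfolding is_star_def by metis
          thus ?thesis using y s unfolding sep_le_def sep_inv_def by auto
        qed
      qed
      hence "y \<in> \<Inter> (snd ` \<sigma>)" by blast
      thus False using X(2) y(1) by blast
    qed
    have "X \<subseteq> A - B" using conn_side[OF g sAB bX(2)[OF X(1)] bX(1)[OF X(1)] dis] xA x by blast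
    moreover obtain Y where "Y \<in> \<B>" "Y \<subseteq> B - A" using AB(1) sO unfolding Or_def by auto
    ultimately show False using nb[OF sAB] X(1) by blast
  qed
  show ?thesis unfolding is_Fk_tangle_def using orient cons nF by blast
qed

lemma dir2:
  assumes fin: "finite V" and g: "is_graph V E" and k: "k > 0" and T: "is_Fk_tangle V E k Or"
  shows "\<exists>\<B>. is_bramble V E \<B> \<and> bramble_order V \<B> \<ge> k"
proof -
  have ori: "is_orientation V E k Or" and con: "is_consistent V E k Or"
    and nF: "\<And>\<sigma>. \<sigma> \<subseteq> Or \<Longrightarrow> \<sigma> \<notin> Fk V E k"
    using T unfolding is_Fk_tangle_def by auto
  have Esym: "E a b \<Longrightarrow> E b a" "E a b \<Longrightarrow> a \<in> V" "E a b \<Longrightarrow> b \<in> V" for a b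
    using g unfolding is_graph_def by auto
  define sepC where "sepC C = (V - C, C \<union> nbr V E C)" for C
  have nbrV: "nbr V E C \<subseteq> V - C" for C unfolding nbr_def by auto
  have sepC_vSk: "sepC C \<in> vSk V E k" if "C \<subseteq> V" "card (nbr V E C) < k" for C
  proof -
    have "fst (sepC C) \<inter> snd (sepC C) = nbr V E C" unfolding sepC_def using nbrV[of C] by auto
    moreover have "oriented_sep V E (sepC C)"
      unfolding oriented_sep_def sepC_def nbr_def using that(1) Esym by auto
    ultimately show ?thesis unfolding vSk_def using that(2) by auto
  qed
  define \<B> where "\<B> = {C. C \<subseteq> V \<and> connected_in E C \<and> card (nbr V E C) < k \<and> sepC C \<in> Or}"
  have inv_in: "\<And>s. s \<in> vSk V E k \<Longrightarrow> s \<in> Or \<or> sep_inv s \<in> Or"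
    and notboth: "\<And>s. s \<in> vSk V E k \<Longrightarrow> s \<noteq> sep_inv s \<Longrightarrow> \<not>(s \<in> Or \<and> sep_inv s \<in> Or)"
    using ori unfolding is_orientation_def by auto
  have touchB: "touch E C D" if "C \<in> \<B>" "D \<in> \<B>" for C D
  proof (rule ccontr)
    assume nt: "\<not> touch E C D"
    have C: "C \<subseteq> V" "C \<noteq> {}" "card (nbr V E C) < k" "sepC C \<in> Or"
      using that(1) unfolding \<B>_def connected_in_def by auto
    have D: "D \<subseteq> V" "D \<noteq> {}" "card (nbr V E D) < k" "sepC D \<in> Or"
      using that(2) unfolding \<B>_def connected_in_def by auto
    have CD: "C \<inter> D = {}" "\<And>c d. c\<in>C \<Longrightarrow> d\<in>D \<Longrightarrow> \<not> E c d" using nt unfolding touch_def by auto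
    have n1: "nbr V E C \<inter> D = {}" using CD unfolding nbr_def by blast
    have n2: "nbr V E D \<inter> C = {}" using CD Esym unfolding nbr_def by blast
    let ?x = "sep_inv (sepC D)" let ?y = "sepC C"
    have Dv: "sepC D \<in> vSk V E k" using sepC_vSk[OF D(1) D(3)] .
    have xv: "?x \<in> vSk V E k" using sep_inv_vSk[OF g Dv] .
    have yv: "?y \<in> vSk V E k" using sepC_vSk[OF C(1) C(3)] .
    have le: "sep_le ?x ?y" unfolding sep_le_def sep_inv_def sepC_def
      using C(1) D(1) CD(1) n1 n2 nbrV[of C] nbrV[of D] by auto
    have xi: "sep_inv ?x \<in> Or" using D(4) by simp
    have neq1: "?x \<noteq> ?y"
    proof
      assume "?x = ?y"
      hence "sep_inv (sepC D) \<in> Or" using C(4) by simp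
      moreover have "sepC D \<noteq> sep_inv (sepC D)" using D(1,2) unfolding sepC_def sep_inv_def by auto
      ultimately show False using notboth[OF Dv] D(4) by blast
    qed
    have neq2: "{?x, sep_inv ?x} \<noteq> {?y, sep_inv ?y}"
    proof
      assume eq: "{?x, sep_inv ?x} = {?y, sep_inv ?y}"
      hence "?x = sep_inv ?y" using neq1 by (auto simp: doubleton_eq_iff)
      hence "V - D = V - C" unfolding sep_inv_def sepC_def by simp
      hence "C = D" using C(1) D(1) by blast
      thus False using CD(1) C(2) by blast
    qed
    show False using con xv yv le neq1 neq2 xi C(4) unfolding is_consistent_def by blast
  qed
  have H: "\<exists>C\<in>\<B>. C \<inter> Z = {}" if Z: "Z \<subseteq> V" "card Z < k" for Z
  proof (cases "Z = V")
    case True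
    have vv: "(V,V) \<in> vSk V E k" unfolding vSk_def oriented_sep_def using True Z by auto
    hence "(V,V) \<in> Or" using inv_in[OF vv] by (simp add: sep_inv_def)
    moreover have "{(V,V)} \<in> Fk V E k" unfolding Fk_def is_star_def using vv True Z by auto
    ultimately show ?thesis using nF[of "{(V,V)}"] by blast
  next
    case False
    have finZ: "finite Z" using Z(1) fin finite_subset by blast
    define R where "R a b \<longleftrightarrow> a \<in> V - Z \<and> b \<in> V - Z \<and> E a b" for a b
    define comp where "comp v = {u. R\<^sup>*\<^sup>* v u}" for v
    have Rsym: "R a b \<Longrightarrow> R b a" for a b unfolding R_def using Esym by auto
    have compsub: "comp v \<subseteq> V - Z" if "v \<in> V - Z" for v
    proof
      fix u assume "u \<in> comp v"
      hence "R\<^sup>*\<^sup>* v u" unfolding comp_def by simp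
      thus "u \<in> V - Z" by (induction rule: rtranclp_induct) (use that R_def in auto)
    qed
    have vcomp: "v \<in> comp v" for v unfolding comp_def by simp
    have compeq: "comp v = comp w" if "u \<in> comp v" "u \<in> comp w" for u v w
    proof -
      have vu: "R\<^sup>*\<^sup>* v u" and wu: "R\<^sup>*\<^sup>* w u" using that unfolding comp_def by auto
      have uw: "R\<^sup>*\<^sup>* u w" using sym_rtranclp[of R, OF Rsym wu] by blast
      have uv: "R\<^sup>*\<^sup>* u v" using sym_rtranclp[of R, OF Rsym vu] by blast
      have vw: "R\<^sup>*\<^sup>* v w" using vu uw by (rule rtranclp_trans)
      have wv: "R\<^sup>*\<^sup>* w v" using wu uv by (rule rtranclp_trans)
      show ?thesis unfolding comp_def using vw wv by (auto intro: rtranclp_trans)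
    qed
    have compconn: "connected_in E (comp v)" if "v \<in> V - Z" for v
    proof -
      let ?C = "comp v"
      let ?RC = "\<lambda>a b. a \<in> ?C \<and> b \<in> ?C \<and> E a b"
      have fw: "?RC\<^sup>*\<^sup>* v u" if "R\<^sup>*\<^sup>* v u" for u
        using that
      proof (induction rule: rtranclp_induct)
        case base thus ?case by simp
      next
        case (step b c)
        have "b \<in> ?C" "c \<in> ?C" using step(1,2) unfolding comp_def
          by (auto intro: rtranclp.rtrancl_into_rtrancl)
        moreover have "E b c" using step(2) unfolding R_def by simp
        ultimately show ?case using step(3) by (simp add: rtranclp.rtrancl_into_rtrancl)
      qed
      have RCsym: "?RC a b \<Longrightarrow> ?RC b a" for a b using Esym by auto
      have "?RC\<^sup>*\<^sup>* x y" if "x \<in> ?C" "y \<in> ?C" for x y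
      proof -
        have vx: "?RC\<^sup>*\<^sup>* v x" and vy: "?RC\<^sup>*\<^sup>* v y" using fw that unfolding comp_def by auto
        have "?RC\<^sup>*\<^sup>* x v" using sym_rtranclp[of ?RC, OF RCsym vx] by blast
        thus ?thesis using vy by (rule rtranclp_trans)
      qed
      moreover have "?C \<noteq> {}" using vcomp by auto
      ultimately show ?thesis unfolding connected_in_def by blast
    qed
    have compnbr: "nbr V E (comp v) \<subseteq> Z" if "v \<in> V - Z" for v
    proof
      fix u assume "u \<in> nbr V E (comp v)"
      then obtain c where c: "c \<in> comp v" "E c u" "u \<in> V" "u \<notin> comp v" unfolding nbr_def by auto
      show "u \<in> Z"
      proof (rule ccontr)
        assume "u \<notin> Z"
        hence "R c u" using c compsub[OF that] unfolding R_def by auto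
        hence "u \<in> comp v" using c(1) unfolding comp_def by (auto intro: rtranclp.rtrancl_into_rtrancl)
        thus False using c(4) by simp
      qed
    qed
    show ?thesis
    proof (rule ccontr)
      assume nH: "\<not> ?thesis"
      define comps where "comps = comp ` (V - Z)"
      have cprops: "C \<subseteq> V" "C \<inter> Z = {}" "connected_in E C" "card (nbr V E C) < k" "nbr V E C \<subseteq> Z"
        if Cc: "C \<in> comps" for C
      proof -
        obtain v where v: "v \<in> V - Z" "C = comp v" using Cc unfolding comps_def by blast
        show "C \<subseteq> V" "C \<inter> Z = {}" using compsub[OF v(1)] v(2) by auto
        show "connected_in E C" using compconn[OF v(1)] v(2) by simp
        show nZ: "nbr V E C \<subseteq> Z" using compnbr[OF v(1)] v(2) by simp
        have "card (nbr V E C) \<le> card Z" using card_mono[OF finZ nZ] .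
        thus "card (nbr V E C) < k" using Z(2) by simp
      qed
      have notin: "sepC C \<notin> Or" if "C \<in> comps" for C
        using nH cprops[OF that] unfolding \<B>_def by auto
      have invin: "sep_inv (sepC C) \<in> Or" if "C \<in> comps" for C
        using inv_in[OF sepC_vSk[OF cprops(1,4)[OF that]]] notin[OF that] by auto
      define \<sigma> where "\<sigma> = (\<lambda>C. sep_inv (sepC C)) ` comps"
      have cne: "comps \<noteq> {}" using False Z(1) unfolding comps_def by auto
      have "\<sigma> \<subseteq> Or" using invin unfolding \<sigma>_def by auto
      moreover have "\<sigma> \<in> Fk V E k"
        unfolding Fk_def
      proof (intro CollectI conjI)
        show "\<sigma> \<subseteq> vSk V E k" using sep_inv_vSk[OF g sepC_vSk] cprops unfolding \<sigma>_def by auto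
        show "finite \<sigma>" using fin unfolding \<sigma>_def comps_def by auto
        have cdis: "C1 \<inter> C2 = {}" if "C1 \<in> comps" "C2 \<in> comps" "C1 \<noteq> C2" for C1 C2
          using that compeq unfolding comps_def by blast
        show "is_star \<sigma>" unfolding is_star_def
        proof (intro conjI ballI impI)
          show "\<sigma> \<noteq> {}" using cne unfolding \<sigma>_def by auto
          fix r s assume r: "r \<in> \<sigma>" and s: "s \<in> \<sigma>" and rs: "r \<noteq> s"
          obtain C1 where C1: "C1 \<in> comps" "r = sep_inv (sepC C1)" using r unfolding \<sigma>_def by blast
          obtain C2 where C2: "C2 \<in> comps" "s = sep_inv (sepC C2)" using s unfolding \<sigma>_def by blast
          have "C1 \<noteq> C2" using rs C1 C2 by auto
          hence "C1 \<inter> C2 = {}" using cdis C1 C2 by blast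
          thus "sep_le r (sep_inv s)" unfolding C1(2) C2(2) sep_le_def sep_inv_def sepC_def
            using cprops[OF C1(1)] cprops[OF C2(1)] nbrV[of C1] nbrV[of C2] by auto
        qed
        have "\<Inter> (snd ` \<sigma>) = Z"
        proof
          show "Z \<subseteq> \<Inter> (snd ` \<sigma>)" using Z(1) cprops(2) unfolding \<sigma>_def sep_inv_def sepC_def by auto
          show "\<Inter> (snd ` \<sigma>) \<subseteq> Z"
          proof
            fix u assume u: "u \<in> \<Inter> (snd ` \<sigma>)"
            hence uall: "u \<in> V - C" if "C \<in> comps" for C
            proof -
              have "u \<in> snd (sep_inv (sepC C))" using u that unfolding \<sigma>_def by blast
              thus ?thesis by (simp add: sep_inv_def sepC_def)
            qed
            obtain C0 where "C0 \<in> comps" using cne by blast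
            hence "u \<in> V" using uall[of C0] by blast
            show "u \<in> Z"
            proof (rule ccontr)
              assume "u \<notin> Z"
              hence "comp u \<in> comps" using \<open>u \<in> V\<close> unfolding comps_def by auto
              thus False using uall[of "comp u"] vcomp[of u] by blast
            qed
          qed
        qed
        thus "card (\<Inter> (snd ` \<sigma>)) < k" using Z(2) by simp
      qed
      ultimately show False using nF by blast
    qed
  qed
  have BV: "C \<subseteq> V" "C \<noteq> {}" if "C \<in> \<B>" for C using that unfolding \<B>_def connected_in_def by auto
  have b1: "\<forall>X\<in>\<B>. X \<subseteq> V \<and> connected_in E X" unfolding \<B>_def by blast
  have b2: "\<forall>X\<in>\<B>. \<forall>Y\<in>\<B>. touch E X Y" using touchB by blast
  have isb: "is_bramble V E \<B>" unfolding is_bramble_def using b1 b2 by blast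
  let ?S = "{card C | C. C \<subseteq> V \<and> (\<forall>X \<in> \<B>. C \<inter> X \<noteq> {})}"
  have VX: "\<forall>X\<in>\<B>. V \<inter> X \<noteq> {}"
  proof
    fix X assume "X \<in> \<B>"
    hence "X \<subseteq> V" "X \<noteq> {}" using BV by auto
    thus "V \<inter> X \<noteq> {}" by blast
  qed
  have "card V \<in> ?S" using VX by blast
  moreover have finS: "finite ?S"
  proof -
    have "?S \<subseteq> card ` Pow V" by blast
    thus ?thesis using fin by (meson finite_Pow_iff finite_imageI finite_subset)
  qed
  ultimately have "Min ?S \<in> ?S" by (metis (no_types, lifting) Min_in empty_iff)
  then obtain C where C: "Min ?S = card C" "C \<subseteq> V" "\<forall>X\<in>\<B>. C \<inter> X \<noteq> {}" by blast
  have "k \<le> card C"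
  proof (rule ccontr)
    assume "\<not> k \<le> card C"
    hence "card C < k" by simp
    then obtain X where "X \<in> \<B>" "X \<inter> C = {}" using H[OF C(2)] by blast
    thus False using C(3) by blast
  qed
  hence "bramble_order V \<B> \<ge> k" unfolding bramble_order_def using C(1) by (simp only:)
  thus ?thesis using isb by blast
qed

theorem lemma5p8:
  fixes V :: "'a set" and E :: "'a \<Rightarrow> 'a \<Rightarrow> bool" and k :: nat
  assumes "finite V" and "V \<noteq> {}" and "is_graph V E" and "k > 0"
  shows "(\<exists>\<B>. is_bramble V E \<B> \<and> bramble_order V \<B> \<ge> k) \<longleftrightarrow>
         (\<exists>Or. is_Fk_tangle V E k Or)"
  using dir1[OF assms(1,3,4)] dir2[OF assms(1,3,4)] by blast

end
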